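(* Consider a network $\dot{x}_i=f(x_i)+u_i$, $i=1,\dots,N$, $x_i\in\mathbb{R}^n$, with $u_i$ depending on $x_1,\dots,x_N$. Suppose there is a smooth $\Phi:(\mathbb{R}^n)^N\times(\mathbb{R}^n)^N\to\mathbb{R}^n$ such that for every $i=1,\dots,N$, $$\Phi(x_i,x_{i+1},\dots,x_{i+N-1},x_1,\dots,x_N)=f(x_i)+u_i,$$ with indices taken modulo $N$. Define $\Psi:\mathbb{R}^{nN}\times(\mathbb{R}^n)^N\to\mathbb{R}^{nN}$ by, for $Y=(y_1,\dots,y_N)\in(\mathbb{R}^n)^N$, letting the $k$-th $n$-block of $\Psi(Y,x_1,\dots,x_N)$ be $\Phi(y_k,y_{k+1},\dots,y_{k+N-1},x_1,\dots,x_N)$ (indices mod $N$). Let $(x_1(t),\dots,x_N(t))$ be a solution of the network and suppose there is $\lambda>0$ with $\big(\tfrac{\partial\Psi}{\partial Y}(Y,x_1(t),\dots,x_N(t))\big)_s\preceq-\lambda I$ for all $Y\in\mathbb{R}^{nN}$ and $t\ge0$. Then $\|x_i(t)-x_j(t)\|\to0$ exponentially as $t\to\infty$ for all $i,j$. In particular, if this holds for every solution, the network is completely synchronized regardless of initial conditions.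
   Context: For a square matrix $M$, $M_s=\tfrac12(M+M^T)$. $M\preceq N$ means $N-M$ is positive semidefinite. *)

theory Defs
  imports "HOL-Analysis.Analysis"
begin

text \<open>Iterated partial derivatives: pderivs f vs g means g is obtained from f by
  differentiating successively along the directions of vs (last element first).\<close>
fun pderivs :: "('a::euclidean_space \<Rightarrow> 'b::real_normed_vector) \<Rightarrow> 'a list \<Rightarrow> ('a \<Rightarrow> 'b) \<Rightarrow> bool" where
  "pderivs f [] g = (g = f)"
| "pderivs f (v # vs) h =
     (\<exists>g. pderivs f vs g \<and> (\<forall>x. ((\<lambda>t. g (x + t *\<^sub>R v)) has_vector_derivative h x) (at 0)))"

definition smooth :: "('a::euclidean_space \<Rightarrow> 'b::real_normed_vector) \<Rightarrow> bool" where
  "smooth f \<longleftrightarrow> (\<forall>vs. set vs \<subseteq> Basis \<longrightarrow> (\<exists>g. pderivs f vs g \<and> continuous_on UNIV g))"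

text \<open>Matrices indexed by the standard basis of a Euclidean space.\<close>
definition mat_of_lin :: "('a::euclidean_space \<Rightarrow> 'a) \<Rightarrow> 'a \<Rightarrow> 'a \<Rightarrow> real" where
  "mat_of_lin L = (\<lambda>a b. a \<bullet> L b)"

definition sym_part :: "('a \<Rightarrow> 'a \<Rightarrow> real) \<Rightarrow> 'a \<Rightarrow> 'a \<Rightarrow> real" where
  "sym_part M = (\<lambda>a b. (M a b + M b a) / 2)"

definition id_mat :: "'a \<Rightarrow> 'a \<Rightarrow> real" where
  "id_mat = (\<lambda>a b. if a = b then 1 else 0)"

definition psd_on :: "'a set \<Rightarrow> ('a \<Rightarrow> 'a \<Rightarrow> real) \<Rightarrow> bool" where
  "psd_on B M \<longleftrightarrow> (\<forall>c. 0 \<le> (\<Sum>a\<in>B. \<Sum>b\<in>B. c a * M a b * c b))"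

definition loewner_le :: "'a set \<Rightarrow> ('a \<Rightarrow> 'a \<Rightarrow> real) \<Rightarrow> ('a \<Rightarrow> 'a \<Rightarrow> real) \<Rightarrow> bool" where
  "loewner_le B M M' \<longleftrightarrow> psd_on B (\<lambda>a b. M' a b - M a b)"

text \<open>Cyclic labelling: \<iota> enumerates the agents as \<iota> 0, ..., \<iota> (N-1); pos is its inverse.\<close>
definition pos :: "(nat \<Rightarrow> 'N::finite) \<Rightarrow> 'N \<Rightarrow> nat" where
  "pos \<iota> k = inv_into {..<CARD('N)} \<iota> k"

text \<open>rot \<iota> k Y = (y_k, y_{k+1}, ..., y_{k+N-1}), indices mod N.\<close>
definition rot :: "(nat \<Rightarrow> 'N::finite) \<Rightarrow> 'N \<Rightarrow> 'v ^ 'N \<Rightarrow> 'v ^ 'N" where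
  "rot \<iota> k Y = (\<chi> j. Y $ \<iota> ((pos \<iota> k + pos \<iota> j) mod CARD('N)))"

definition Psi :: "(nat \<Rightarrow> 'N::finite) \<Rightarrow> ('v ^ 'N \<Rightarrow> 'v ^ 'N \<Rightarrow> 'v) \<Rightarrow> 'v ^ 'N \<Rightarrow> 'v ^ 'N \<Rightarrow> 'v ^ 'N" where
  "Psi \<iota> \<Phi> Y X = (\<chi> k. \<Phi> (rot \<iota> k Y) X)"

end

theory Submission
  imports Defs
begin


lemma line_deriv:
  fixes F :: "'a::real_normed_vector \<Rightarrow> 'b::real_normed_vector"
  assumes "\<And>z. ((\<lambda>t. F (z + t *\<^sub>R b)) has_vector_derivative P z) (at 0)"
  shows "((\<lambda>t. F (z + t *\<^sub>R b)) has_vector_derivative P (z + s *\<^sub>R b)) (at s)"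
proof -
  have 1: "((\<lambda>t. t - s) has_vector_derivative 1) (at s)"
    by (auto intro!: derivative_eq_intros)
  have 2: "((\<lambda>t. F ((z + s *\<^sub>R b) + t *\<^sub>R b)) has_vector_derivative P (z + s *\<^sub>R b)) (at ((\<lambda>t. t - s) s))"
    using assms by simp
  have 3: "((\<lambda>t. F ((z + s *\<^sub>R b) + t *\<^sub>R b)) \<circ> (\<lambda>t. t - s)) = (\<lambda>t. F (z + t *\<^sub>R b))"
    by (auto simp: algebra_simps)
  from vector_diff_chain_at[OF 1 2] show ?thesis by (simp only: 3) simp
qed

lemma seg_bound:
  fixes F :: "'a::real_normed_vector \<Rightarrow> 'b::real_normed_vector"
  assumes der: "\<And>z. ((\<lambda>t. F (z + t *\<^sub>R b)) has_vector_derivative P z) (at 0)"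
    and bnd: "\<And>s. \<bar>s\<bar> \<le> \<bar>h\<bar> \<Longrightarrow> norm (P (z + s *\<^sub>R b) - c) \<le> e"
  shows "norm (F (z + h *\<^sub>R b) - F z - h *\<^sub>R c) \<le> e * \<bar>h\<bar>"
proof -
  let ?g = "\<lambda>t. F (z + t *\<^sub>R b) - t *\<^sub>R c"
  have d: "(?g has_derivative (\<lambda>u. u *\<^sub>R (P (z + s *\<^sub>R b) - c))) (at s within cball 0 \<bar>h\<bar>)" for s
  proof -
    have "((\<lambda>t. F (z + t *\<^sub>R b)) has_derivative (\<lambda>u. u *\<^sub>R P (z + s *\<^sub>R b))) (at s)"
      using line_deriv[OF der] unfolding has_vector_derivative_def .
    then have "(?g has_derivative (\<lambda>u. u *\<^sub>R P (z + s *\<^sub>R b) - u *\<^sub>R c)) (at s)"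
      by (auto intro!: derivative_eq_intros)
    then show ?thesis
      by (auto intro: has_derivative_at_withinI simp: scaleR_diff_right)
  qed
  have o: "onorm (\<lambda>u. u *\<^sub>R (P (z + s *\<^sub>R b) - c)) \<le> e" if "s \<in> cball 0 \<bar>h\<bar>" for s
  proof -
    have "onorm (\<lambda>u::real. u *\<^sub>R (P (z + s *\<^sub>R b) - c)) = onorm (\<lambda>u::real. u) * norm (P (z + s *\<^sub>R b) - c)"
      by (rule onorm_scaleR_left) (rule bounded_linear_ident)
    also have "\<dots> = norm (P (z + s *\<^sub>R b) - c)" by (simp add: onorm_id)
    also have "\<dots> \<le> e" using that by (intro bnd) (auto simp: dist_real_def)
    finally show ?thesis .
  qed
  have "norm (?g h - ?g 0) \<le> e * norm (h - 0)"
    by (rule differentiable_bound[OF convex_cball d o]) auto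
  then show ?thesis by (simp add: algebra_simps)
qed

lemma inner_partial_sum:
  fixes v :: "'a::euclidean_space"
  assumes "S \<subseteq> Basis" "c \<in> Basis"
  shows "(\<Sum>d\<in>S. (v \<bullet> d) *\<^sub>R d) \<bullet> c = (if c \<in> S then v \<bullet> c else 0)"
proof -
  have "(\<Sum>d\<in>S. (v \<bullet> d) *\<^sub>R d) \<bullet> c = (\<Sum>d\<in>S. (v \<bullet> d) * (if d = c then 1 else 0))"
    using assms by (auto simp: inner_sum_left inner_Basis intro!: sum.cong)
  also have "\<dots> = (if c \<in> S then v \<bullet> c else 0)"
    using assms finite_subset[OF assms(1)] by (simp add: if_distrib[of "\<lambda>x. _ * x"] sum.delta' cong: if_cong)
  finally show ?thesis .
qed

lemma regroup: "(a::'a::ab_group_add) - b - (c + d) = (a - e - c) + (e - b - d)"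
  by (simp add: algebra_simps)

lemma partials_diff:
  fixes F :: "'a::euclidean_space \<Rightarrow> 'b::real_normed_vector"
  assumes der: "\<And>b z. b \<in> Basis \<Longrightarrow> ((\<lambda>t. F (z + t *\<^sub>R b)) has_vector_derivative P b z) (at 0)"
    and cont: "\<And>b. b \<in> Basis \<Longrightarrow> continuous_on UNIV (P b)"
  shows "(F has_derivative (\<lambda>h. \<Sum>b\<in>Basis. (h \<bullet> b) *\<^sub>R P b x)) (at x)"
  unfolding has_derivative_at_alt
proof (intro conjI allI impI)
  show "bounded_linear (\<lambda>h. \<Sum>b\<in>Basis. (h \<bullet> b) *\<^sub>R P b x)"
    by (intro bounded_linear_sum) (rule bounded_linear_compose[OF bounded_linear_scaleR_left bounded_linear_inner_left])
  fix e :: real assume e: "e > 0"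
  define e' where "e' = e / DIM('a)"
  have e': "e' > 0" using e by (simp add: e'_def)
  have "\<forall>b\<in>Basis. \<exists>d>0. \<forall>z. dist z x < d \<longrightarrow> dist (P b z) (P b x) < e'"
    using cont e' unfolding continuous_on_iff by blast
  then obtain d where d: "\<And>b. b \<in> Basis \<Longrightarrow> d b > 0 \<and> (\<forall>z. dist z x < d b \<longrightarrow> dist (P b z) (P b x) < e')"
    by metis
  define \<delta> where "\<delta> = Min (d ` Basis)"
  have \<delta>: "\<delta> > 0" using d by (simp add: \<delta>_def)
  have \<delta>le: "\<And>b. b \<in> Basis \<Longrightarrow> \<delta> \<le> d b" by (simp add: \<delta>_def)
  show "\<exists>d>0. \<forall>y. norm (y - x) < d \<longrightarrow> norm (F y - F x - (\<Sum>b\<in>Basis. ((y - x) \<bullet> b) *\<^sub>R P b x)) \<le> e * norm (y - x)"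
  proof (intro exI conjI allI impI)
    show "\<delta> > 0" by (rule \<delta>)
    fix y assume y: "norm (y - x) < \<delta>"
    define v where "v = y - x"
    have key: "norm (F (x + (\<Sum>c\<in>S. (v \<bullet> c) *\<^sub>R c)) - F x - (\<Sum>c\<in>S. (v \<bullet> c) *\<^sub>R P c x)) \<le> e' * (\<Sum>c\<in>S. \<bar>v \<bullet> c\<bar>)"
      if "S \<subseteq> Basis" for S
    proof -
      have "finite S" by (rule finite_subset[OF that]) simp
      then show ?thesis using that
      proof (induction S rule: finite_induct)
        case empty
        then show ?case by simp
      next
        case (insert b S)
        let ?z = "x + (\<Sum>c\<in>S. (v \<bullet> c) *\<^sub>R c)"
        have b: "b \<in> Basis" and S: "S \<subseteq> Basis" using insert by auto
        have step: "norm (F (?z + (v \<bullet> b) *\<^sub>R b) - F ?z - (v \<bullet> b) *\<^sub>R P b x) \<le> e' * \<bar>v \<bullet> b\<bar>"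
        proof (rule seg_bound[where P="P b"])
          show "((\<lambda>t. F (z + t *\<^sub>R b)) has_vector_derivative P b z) (at 0)" for z using der b .
          fix s :: real assume s: "\<bar>s\<bar> \<le> \<bar>v \<bullet> b\<bar>"
          have "norm ((\<Sum>c\<in>S. (v \<bullet> c) *\<^sub>R c) + s *\<^sub>R b) \<le> norm v"
          proof (rule norm_le_componentwise)
            fix c :: 'a assume c: "c \<in> Basis"
            show "\<bar>((\<Sum>c\<in>S. (v \<bullet> c) *\<^sub>R c) + s *\<^sub>R b) \<bullet> c\<bar> \<le> \<bar>v \<bullet> c\<bar>"
              (is "\<bar>?l\<bar> \<le> _")
            proof -
              have ip: "(\<Sum>c\<in>S. (v \<bullet> c) *\<^sub>R c) \<bullet> c = (if c \<in> S then v \<bullet> c else 0)"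
                by (rule inner_partial_sum[OF S c])
              have bc: "b \<bullet> c = (if b = c then 1 else 0)" using b c by (rule inner_Basis)
              have "?l = (if c \<in> S then v \<bullet> c else 0) + s * (if b = c then 1 else 0)"
                by (simp only: inner_add_left inner_scaleR_left ip bc)
              then show ?thesis using s insert.hyps(2) by (cases "c \<in> S"; cases "b = c") auto
            qed
          qed
          moreover have "dist (?z + s *\<^sub>R b) x = norm ((\<Sum>c\<in>S. (v \<bullet> c) *\<^sub>R c) + s *\<^sub>R b)"
            by (simp add: dist_norm add.assoc)
          ultimately have "dist (?z + s *\<^sub>R b) x < d b"
            using y \<delta>le[OF b] unfolding v_def by linarith
          then show "norm (P b (?z + s *\<^sub>R b) - P b x) \<le> e'"
            using d[OF b] by (auto simp: dist_norm intro: less_imp_le)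
        qed
        have "norm (F (x + (\<Sum>c\<in>insert b S. (v \<bullet> c) *\<^sub>R c)) - F x - (\<Sum>c\<in>insert b S. (v \<bullet> c) *\<^sub>R P c x))
            = norm ((F (?z + (v \<bullet> b) *\<^sub>R b) - F ?z - (v \<bullet> b) *\<^sub>R P b x)
                   + (F ?z - F x - (\<Sum>c\<in>S. (v \<bullet> c) *\<^sub>R P c x)))"
        proof -
          have e1: "x + (\<Sum>c\<in>insert b S. (v \<bullet> c) *\<^sub>R c) = ?z + (v \<bullet> b) *\<^sub>R b"
            using insert.hyps by (simp add: add_ac)
          have e2: "(\<Sum>c\<in>insert b S. (v \<bullet> c) *\<^sub>R P c x) = (v \<bullet> b) *\<^sub>R P b x + (\<Sum>c\<in>S. (v \<bullet> c) *\<^sub>R P c x)"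
            using insert.hyps by simp
          show ?thesis unfolding e1 e2 by (rule arg_cong[where f=norm]) (rule regroup)
        qed
        also have "\<dots> \<le> norm (F (?z + (v \<bullet> b) *\<^sub>R b) - F ?z - (v \<bullet> b) *\<^sub>R P b x)
                   + norm (F ?z - F x - (\<Sum>c\<in>S. (v \<bullet> c) *\<^sub>R P c x))"
          by (rule norm_triangle_ineq)
        also have "\<dots> \<le> e' * \<bar>v \<bullet> b\<bar> + e' * (\<Sum>c\<in>S. \<bar>v \<bullet> c\<bar>)"
          using step insert.IH S by (intro add_mono)
        also have "\<dots> = e' * (\<Sum>c\<in>insert b S. \<bar>v \<bullet> c\<bar>)"
          using insert.hyps by (simp add: distrib_left)
        finally show ?case .
      qed
    qed
    from key[of Basis] have "norm (F y - F x - (\<Sum>b\<in>Basis. ((y - x) \<bullet> b) *\<^sub>R P b x)) \<le> e' * (\<Sum>c\<in>Basis. \<bar>v \<bullet> c\<bar>)"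
          by (simp add: euclidean_representation v_def)
    also have "\<dots> \<le> e' * (\<Sum>c\<in>(Basis::'a set). norm v)"
      using e' by (intro mult_left_mono sum_mono Basis_le_norm) auto
    also have "\<dots> = e * norm (y - x)"
          by (simp add: e'_def v_def)
    finally show "norm (F y - F x - (\<Sum>b\<in>Basis. ((y - x) \<bullet> b) *\<^sub>R P b x)) \<le> e * norm (y - x)" .
  qed
qed

lemma smooth_diff:
  fixes F :: "'a::euclidean_space \<Rightarrow> 'b::real_normed_vector"
  assumes "smooth F"
  shows "\<exists>D. (F has_derivative D) (at z)"
proof -
  have "\<forall>b\<in>Basis. \<exists>g. (\<forall>x. ((\<lambda>t. F (x + t *\<^sub>R b)) has_vector_derivative g x) (at 0)) \<and> continuous_on UNIV g"
  proof
    fix b :: 'a assume b: "b \<in> Basis"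
    from assms[unfolded smooth_def, rule_format, of "[b]"] b
    obtain g where "pderivs F [b] g" "continuous_on UNIV g" by auto
    then show "\<exists>g. (\<forall>x. ((\<lambda>t. F (x + t *\<^sub>R b)) has_vector_derivative g x) (at 0)) \<and> continuous_on UNIV g"
      by auto
  qed
  then obtain P where "\<forall>b\<in>Basis. (\<forall>x. ((\<lambda>t. F (x + t *\<^sub>R b)) has_vector_derivative P b x) (at 0)) \<and> continuous_on UNIV (P b)"
    by metis
  then show ?thesis by (blast intro: partials_diff)
qed

lemma loewner_neg:
  fixes D :: "'a::euclidean_space \<Rightarrow> 'a"
  assumes lin: "linear D"
    and le: "loewner_le Basis (sym_part (mat_of_lin D)) (\<lambda>a b. - lam * id_mat a b)"
  shows "v \<bullet> D v \<le> - lam * (v \<bullet> v)"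
proof -
  define c where "c = (\<lambda>a. v \<bullet> a)"
  have Dv: "D v = (\<Sum>b\<in>Basis. c b *\<^sub>R D b)"
  proof -
    have "D v = D (\<Sum>b\<in>Basis. c b *\<^sub>R b)" by (simp add: c_def euclidean_representation)
    also have "\<dots> = (\<Sum>b\<in>Basis. c b *\<^sub>R D b)"
      by (simp add: linear_sum[OF lin] linear_scale[OF lin])
    finally show ?thesis .
  qed
  have S1: "(\<Sum>a\<in>Basis. \<Sum>b\<in>Basis. c a * (a \<bullet> D b) * c b) = v \<bullet> D v"
  proof -
    have "(\<Sum>a\<in>Basis. \<Sum>b\<in>Basis. c a * (a \<bullet> D b) * c b) = (\<Sum>a\<in>Basis. c a * (a \<bullet> D v))"
      by (simp add: Dv inner_sum_right sum_distrib_left mult.commute mult.left_commute)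
    also have "\<dots> = v \<bullet> D v"
      by (simp add: c_def euclidean_inner[of v "D v"] inner_commute)
    finally show ?thesis .
  qed
  have S2': "(\<Sum>a\<in>Basis. \<Sum>b\<in>Basis. c a * (b \<bullet> D a) * c b) = (\<Sum>a\<in>Basis. \<Sum>b\<in>Basis. c a * (a \<bullet> D b) * c b)"
    by (subst sum.swap) (simp add: mult.commute mult.left_commute)
  have S2: "(\<Sum>a\<in>Basis. \<Sum>b\<in>Basis. c a * (b \<bullet> D a) * c b) = v \<bullet> D v"
    using S2' S1 by (rule trans)
  have S3: "(\<Sum>a\<in>Basis. \<Sum>b\<in>Basis. c a * id_mat a b * c b) = v \<bullet> v"
    by (simp add: id_mat_def c_def euclidean_inner[of v v] if_distrib[of "\<lambda>x. _ * x * _"] sum.delta cong: if_cong)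
  have "0 \<le> (\<Sum>a\<in>Basis. \<Sum>b\<in>Basis. c a * (- lam * id_mat a b - sym_part (mat_of_lin D) a b) * c b)"
    using le unfolding loewner_le_def psd_on_def by blast
  also have "\<dots> = - lam * (\<Sum>a\<in>Basis. \<Sum>b\<in>Basis. c a * id_mat a b * c b)
      - ((\<Sum>a\<in>Basis. \<Sum>b\<in>Basis. c a * (a \<bullet> D b) * c b) + (\<Sum>a\<in>Basis. \<Sum>b\<in>Basis. c a * (b \<bullet> D a) * c b)) / 2"
    by (simp add: sym_part_def mat_of_lin_def sum_distrib_left sum_subtractf sum_divide_distrib
        sum.distrib[symmetric] algebra_simps add_divide_distrib diff_divide_distrib)
  also have "\<dots> = - lam * (v \<bullet> v) - v \<bullet> D v" by (simp add: S1 S2 S3)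
  finally show ?thesis by simp
qed

lemma contraction_ineq:
  fixes G :: "'a::real_inner \<Rightarrow> 'a"
  assumes der: "\<And>Y. (G has_derivative DD Y) (at Y)"
    and neg: "\<And>Y v. v \<bullet> DD Y v \<le> - lam * (v \<bullet> v)"
  shows "(Y1 - Y2) \<bullet> (G Y1 - G Y2) \<le> - lam * ((Y1 - Y2) \<bullet> (Y1 - Y2))"
proof -
  define v where "v = Y1 - Y2"
  define h where "h = (\<lambda>s::real. v \<bullet> G (Y2 + s *\<^sub>R v))"
  have hd: "(h has_derivative (\<lambda>u. v \<bullet> DD (Y2 + s *\<^sub>R v) (u *\<^sub>R v))) (at s within {0..1})" for s
  proof -
    have l: "((\<lambda>s. Y2 + s *\<^sub>R v) has_derivative (\<lambda>u. u *\<^sub>R v)) (at s)"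
      by (auto intro!: derivative_eq_intros)
    have "((G \<circ> (\<lambda>s. Y2 + s *\<^sub>R v)) has_derivative (DD (Y2 + s *\<^sub>R v) \<circ> (\<lambda>u. u *\<^sub>R v))) (at s)"
      by (rule diff_chain_at[OF l der])
    then have "((\<lambda>s. v \<bullet> (G \<circ> (\<lambda>s. Y2 + s *\<^sub>R v)) s) has_derivative (\<lambda>u. v \<bullet> (DD (Y2 + s *\<^sub>R v) \<circ> (\<lambda>u. u *\<^sub>R v)) u)) (at s)"
      by (rule bounded_linear.has_derivative[OF bounded_linear_inner_right])
    then show ?thesis unfolding h_def comp_def by (rule has_derivative_at_withinI)
  qed
  obtain \<xi> where "h 1 - h 0 = v \<bullet> DD (Y2 + \<xi> *\<^sub>R v) ((1 - 0) *\<^sub>R v)"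
    using mvt_very_simple[of 0 1 h, OF _ hd] by auto
  moreover have "h 1 = v \<bullet> G Y1" "h 0 = v \<bullet> G Y2" by (simp_all add: h_def v_def)
  ultimately have "v \<bullet> G Y1 - v \<bullet> G Y2 = v \<bullet> DD (Y2 + \<xi> *\<^sub>R v) v" by simp
  with neg[where Y="Y2 + \<xi> *\<^sub>R v" and v=v] show ?thesis by (simp add: v_def inner_diff_right)
qed

lemma decay:
  fixes w :: "real \<Rightarrow> 'a::real_inner"
  assumes der: "\<And>t. t \<ge> 0 \<Longrightarrow> (w has_vector_derivative w' t) (at t within {0..})"
    and neg: "\<And>t. t \<ge> 0 \<Longrightarrow> w t \<bullet> w' t \<le> - lam * (w t \<bullet> w t)"
    and t: "t \<ge> 0"
  shows "norm (w t) \<le> norm (w 0) * exp (- lam * t)"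
proof -
  define E where "E = (\<lambda>s. exp (2 * lam * s) * (w s \<bullet> w s))"
  define E' where "E' = (\<lambda>s. 2 * lam * exp (2 * lam * s) * (w s \<bullet> w s) + exp (2 * lam * s) * (2 * (w s \<bullet> w' s)))"
  have Ed: "(E has_derivative (\<lambda>u. u * E' s)) (at s within {0..t})" if s: "0 \<le> s" "s \<le> t" for s
  proof -
    have ws: "(w has_derivative (\<lambda>u. u *\<^sub>R w' s)) (at s within {0..t})"
      using der[of s] s has_derivative_subset unfolding has_vector_derivative_def
      by (metis atLeastAtMost_iff atLeast_iff subsetI)
    have i: "((\<lambda>s. w s \<bullet> w s) has_derivative (\<lambda>u. w s \<bullet> (u *\<^sub>R w' s) + (u *\<^sub>R w' s) \<bullet> w s)) (at s within {0..t})"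
      by (rule has_derivative_inner[OF ws ws])
    have ex: "((\<lambda>s. exp (2 * lam * s)) has_derivative (\<lambda>u. u * (2 * lam * exp (2 * lam * s)))) (at s within {0..t})"
      by (auto intro!: derivative_eq_intros)
    have "(E has_derivative (\<lambda>u. exp (2 * lam * s) * (w s \<bullet> (u *\<^sub>R w' s) + (u *\<^sub>R w' s) \<bullet> w s) + u * (2 * lam * exp (2 * lam * s)) * (w s \<bullet> w s))) (at s within {0..t})"
      unfolding E_def by (rule has_derivative_mult[OF ex i])
    then show ?thesis
      by (rule has_derivative_eq_rhs) (auto simp: E'_def algebra_simps inner_commute)
  qed
  obtain \<xi> where \<xi>: "\<xi> \<in> {0..t}" "E t - E 0 = (t - 0) * E' \<xi>"
    using mvt_very_simple[of 0 t E, OF t Ed] by auto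
  have "E' \<xi> \<le> 0"
  proof -
    have "w \<xi> \<bullet> w' \<xi> \<le> - lam * (w \<xi> \<bullet> w \<xi>)" using neg \<xi>(1) by auto
    then have "2 * lam * (w \<xi> \<bullet> w \<xi>) + 2 * (w \<xi> \<bullet> w' \<xi>) \<le> 0" by linarith
    then have "exp (2 * lam * \<xi>) * (2 * lam * (w \<xi> \<bullet> w \<xi>) + 2 * (w \<xi> \<bullet> w' \<xi>)) \<le> 0"
      by (simp add: mult_nonneg_nonpos)
    then show ?thesis by (simp add: E'_def algebra_simps)
  qed
  with t have "t * E' \<xi> \<le> 0" by (intro mult_nonneg_nonpos)
  with \<xi>(2) have "E t \<le> E 0" by simp
  then have "exp (2 * lam * t) * (norm (w t))\<^sup>2 \<le> (norm (w 0))\<^sup>2"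
    by (simp add: E_def power2_norm_eq_inner)
  then have "(norm (w t))\<^sup>2 \<le> (norm (w 0))\<^sup>2 * exp (- (2 * lam * t))"
    by (simp add: exp_minus field_simps)
  also have "\<dots> = (norm (w 0) * exp (- lam * t))\<^sup>2"
    by (simp add: power_mult_distrib power2_eq_square exp_add[symmetric])
  finally show ?thesis
    by (rule power2_le_imp_le) simp
qed



definition nxt :: "(nat \<Rightarrow> 'N::finite) \<Rightarrow> 'N \<Rightarrow> 'N" where
  "nxt \<iota> j = \<iota> ((pos \<iota> j + 1) mod CARD('N))"

definition sh :: "(nat \<Rightarrow> 'N::finite) \<Rightarrow> 'v ^ 'N \<Rightarrow> 'v ^ 'N" where
  "sh \<iota> Y = (\<chi> j. Y $ nxt \<iota> j)"

lemma card_pos: "0 < CARD('N::finite)"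
  by (simp add: card_gt_0_iff)

lemma pos_iota:
  assumes enum: "bij_betw \<iota> {..<CARD('N)} (UNIV :: 'N::finite set)" and "m < CARD('N)"
  shows "pos \<iota> (\<iota> m) = m"
  unfolding pos_def using bij_betw_inv_into_left[OF enum] assms(2) by simp

lemma iota_pos:
  assumes enum: "bij_betw \<iota> {..<CARD('N)} (UNIV :: 'N::finite set)"
  shows "\<iota> (pos \<iota> k) = k"
  unfolding pos_def using bij_betw_inv_into_right[OF enum] by simp

lemma pos_less:
  assumes enum: "bij_betw \<iota> {..<CARD('N)} (UNIV :: 'N::finite set)"
  shows "pos \<iota> k < CARD('N)"
  unfolding pos_def using bij_betwE[OF bij_betw_inv_into[OF enum]] by auto

lemma rot_sh:
  assumes enum: "bij_betw \<iota> {..<CARD('N)} (UNIV :: 'N::finite set)"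
  shows "rot \<iota> k (sh \<iota> Y) = rot \<iota> (nxt \<iota> k) Y"
proof -
  have "\<iota> ((pos \<iota> (\<iota> ((pos \<iota> k + pos \<iota> j) mod CARD('N))) + 1) mod CARD('N))
      = \<iota> ((pos \<iota> (\<iota> ((pos \<iota> k + 1) mod CARD('N))) + pos \<iota> j) mod CARD('N))" for j
    using card_pos[where 'N='N]
    by (simp add: pos_iota[OF enum] mod_add_left_eq mod_add_right_eq mod_Suc_eq add_ac)
  then show ?thesis
    unfolding rot_def sh_def nxt_def by (simp add: vec_eq_iff)
qed

lemma Psi_sh:
  assumes enum: "bij_betw \<iota> {..<CARD('N)} (UNIV :: 'N::finite set)"
  shows "Psi \<iota> \<Phi> (sh \<iota> Y) X = sh \<iota> (Psi \<iota> \<Phi> Y X)"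
  unfolding Psi_def by (simp add: rot_sh[OF enum]) (simp add: sh_def)

lemma linear_rot: "linear (rot \<iota> k :: 'v::real_vector ^ 'N::finite \<Rightarrow> _)"
  by (rule linearI) (simp_all add: rot_def vec_eq_iff)

lemma linear_sh: "linear (sh \<iota> :: 'v::real_vector ^ 'N::finite \<Rightarrow> _)"
  by (rule linearI) (simp_all add: sh_def vec_eq_iff)

lemma bl_rot: "bounded_linear (rot \<iota> k :: 'v::euclidean_space ^ 'N::finite \<Rightarrow> _)"
  by (rule linear_conv_bounded_linear[THEN iffD1, OF linear_rot])

lemma bl_sh: "bounded_linear (sh \<iota> :: 'v::euclidean_space ^ 'N::finite \<Rightarrow> _)"
  by (rule linear_conv_bounded_linear[THEN iffD1, OF linear_sh])

lemma Psi_diff: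
  fixes \<Phi> :: "real ^ 'n ^ 'N::finite \<Rightarrow> real ^ 'n ^ 'N \<Rightarrow> real ^ 'n"
  assumes sm: "smooth (\<lambda>(Y, X). \<Phi> Y X)"
  shows "\<exists>D. ((\<lambda>Z. Psi \<iota> \<Phi> Z X) has_derivative D) (at Y)"
proof -
  have "\<forall>k. \<exists>D. ((\<lambda>Z. \<Phi> (rot \<iota> k Z) X) has_derivative D) (at Y)"
  proof
    fix k
    obtain D where D: "((\<lambda>(Y, X). \<Phi> Y X) has_derivative D) (at (rot \<iota> k Y, X))"
      using smooth_diff[OF sm] by (rule exE)
    have g: "((\<lambda>Z. (rot \<iota> k Z, X)) has_derivative (\<lambda>h. (rot \<iota> k h, 0))) (at Y)"
      by (rule has_derivative_Pair[OF bounded_linear_imp_has_derivative[OF bl_rot] has_derivative_const])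
    have "(((\<lambda>(Y, X). \<Phi> Y X) \<circ> (\<lambda>Z. (rot \<iota> k Z, X))) has_derivative (D \<circ> (\<lambda>h. (rot \<iota> k h, 0)))) (at Y)"
      by (rule diff_chain_at[OF g D])
    then show "\<exists>D. ((\<lambda>Z. \<Phi> (rot \<iota> k Z) X) has_derivative D) (at Y)"
      by (auto simp: comp_def)
  qed
  then obtain DD where DD: "\<And>k. ((\<lambda>Z. \<Phi> (rot \<iota> k Z) X) has_derivative DD k) (at Y)"
    by (rule choice[THEN exE]) blast
  have "((\<lambda>Z. Psi \<iota> \<Phi> Z X) has_derivative (\<lambda>h. \<chi> k. DD k h)) (at Y)"
  proof (rule has_derivative_componentwise_within[THEN iffD2], intro ballI)
    fix i :: "real ^ 'n ^ 'N" assume "i \<in> Basis"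
    then obtain k u where i: "i = axis k u" "u \<in> Basis" unfolding Basis_vec_def by auto
    have "((\<lambda>Z. \<Phi> (rot \<iota> k Z) X \<bullet> u) has_derivative (\<lambda>h. DD k h \<bullet> u)) (at Y)"
      by (rule bounded_linear.has_derivative[OF bounded_linear_inner_left DD])
    then show "((\<lambda>x. Psi \<iota> \<Phi> x X \<bullet> i) has_derivative (\<lambda>x. (\<chi> k. DD k x) \<bullet> i)) (at Y)"
      by (simp add: i inner_axis Psi_def)
  qed
  then show ?thesis by blast
qed

theorem theorem3p5:
  fixes \<iota> :: "nat \<Rightarrow> 'N::finite"
    and f :: "real ^ 'n \<Rightarrow> real ^ 'n"
    and u :: "real ^ 'n ^ 'N \<Rightarrow> real ^ 'n ^ 'N"
    and \<Phi> :: "real ^ 'n ^ 'N \<Rightarrow> real ^ 'n ^ 'N \<Rightarrow> real ^ 'n"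
    and x :: "real \<Rightarrow> real ^ 'n ^ 'N"
    and lam :: real
  assumes enum: "bij_betw \<iota> {..<CARD('N)} UNIV"
    and smooth_Phi: "smooth (\<lambda>(Y, X). \<Phi> Y X)"
    and Phi_eq: "\<And>X i. \<Phi> (rot \<iota> i X) X = f (X $ i) + u X $ i"
    and sol: "\<And>t. t \<ge> 0 \<Longrightarrow>
               (x has_vector_derivative (\<chi> i. f (x t $ i) + u (x t) $ i)) (at t within {0..})"
    and lam: "lam > 0"
    and contr: "\<And>t Y D. t \<ge> 0 \<Longrightarrow> ((\<lambda>Z. Psi \<iota> \<Phi> Z (x t)) has_derivative D) (at Y) \<Longrightarrow>
               loewner_le Basis (sym_part (mat_of_lin D)) (\<lambda>a b. - lam * id_mat a b)"
  shows "\<forall>i j. \<exists>C k. k > 0 \<and> (\<forall>t\<ge>0. norm (x t $ i - x t $ j) \<le> C * exp (- k * t))"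
proof -
  let ?N = "CARD('N)"
  have Pxx: "Psi \<iota> \<Phi> X X = (\<chi> i. f (X $ i) + u X $ i)" for X
    unfolding Psi_def using Phi_eq by simp
  define L where "L = (\<lambda>Y::real^'n^'N. Y - sh \<iota> Y)"
  have blL: "bounded_linear L"
    unfolding L_def by (rule bounded_linear_sub[OF bounded_linear_ident bl_sh])
  define w where "w = (\<lambda>t. L (x t))"
  define w' where "w' = (\<lambda>t. L (Psi \<iota> \<Phi> (x t) (x t)))"
  have wd: "(w has_vector_derivative w' t) (at t within {0..})" if "t \<ge> 0" for t
  proof -
    have "(x has_derivative (\<lambda>h. h *\<^sub>R Psi \<iota> \<Phi> (x t) (x t))) (at t within {0..})"
      using sol[OF that] unfolding has_vector_derivative_def Pxx .
    then have "((\<lambda>t. L (x t)) has_derivative (\<lambda>h. L (h *\<^sub>R Psi \<iota> \<Phi> (x t) (x t)))) (at t within {0..})"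
      by (rule bounded_linear.has_derivative[OF blL])
    then show ?thesis unfolding has_vector_derivative_def w_def w'_def
      by (simp add: linear_scale[OF bounded_linear.linear[OF blL]])
  qed
  have wneg: "w t \<bullet> w' t \<le> - lam * (w t \<bullet> w t)" if "t \<ge> 0" for t
  proof -
    have "\<forall>Y. \<exists>D. ((\<lambda>Z. Psi \<iota> \<Phi> Z (x t)) has_derivative D) (at Y)"
      using Psi_diff[OF smooth_Phi] by blast
    then obtain DD where DD: "\<And>Y. ((\<lambda>Z. Psi \<iota> \<Phi> Z (x t)) has_derivative DD Y) (at Y)"
      by metis
    have neg: "v \<bullet> DD Y v \<le> - lam * (v \<bullet> v)" for Y v
      by (rule loewner_neg[OF has_derivative_linear[OF DD] contr[OF that DD]])
    have "(x t - sh \<iota> (x t)) \<bullet> (Psi \<iota> \<Phi> (x t) (x t) - Psi \<iota> \<Phi> (sh \<iota> (x t)) (x t))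
        \<le> - lam * ((x t - sh \<iota> (x t)) \<bullet> (x t - sh \<iota> (x t)))"
      by (rule contraction_ineq[OF DD neg])
    then show ?thesis unfolding w_def w'_def L_def by (simp add: Psi_sh[OF enum])
  qed
  define K where "K = norm (w 0)"
  have K: "K \<ge> 0" by (simp add: K_def)
  have wb: "norm (w t) \<le> K * exp (- lam * t)" if "t \<ge> 0" for t
    unfolding K_def by (rule decay[OF wd wneg that])
  have step: "norm (x t $ i - x t $ nxt \<iota> i) \<le> K * exp (- lam * t)" if "t \<ge> 0" for t i
  proof -
    have "x t $ i - x t $ nxt \<iota> i = w t $ i" by (simp add: w_def L_def sh_def)
    moreover have "norm (w t $ i) \<le> norm (w t)" by (rule Finite_Cartesian_Product.norm_nth_le)
    ultimately show ?thesis using wb[OF that] by simp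
  qed
  have tel: "norm (x t $ i - x t $ \<iota> ((pos \<iota> i + m) mod ?N)) \<le> real m * (K * exp (- lam * t))"
    if t: "t \<ge> 0" for t i m
  proof (induction m)
    case 0
    then show ?case using iota_pos[OF enum, of i] pos_less[OF enum, of i] by simp
  next
    case (Suc m)
    let ?r = "(pos \<iota> i + m) mod ?N"
    have r: "?r < ?N" using card_pos[where 'N='N] by simp
    have e: "\<iota> ((pos \<iota> i + Suc m) mod ?N) = nxt \<iota> (\<iota> ?r)"
      unfolding nxt_def using pos_iota[OF enum r] by (simp add: mod_Suc_eq)
    show ?case unfolding e
      by (rule order_trans[OF norm_diff_triangle_le[OF Suc.IH step[OF t]]]) (simp add: distrib_right)
  qed
  have main: "\<forall>t\<ge>0. norm (x t $ i - x t $ j) \<le> (2 * real ?N * K) * exp (- lam * t)" for i j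
  proof (intro allI impI)
    fix t :: real assume t: "t \<ge> 0"
    define m where "m = pos \<iota> j + ?N - pos \<iota> i"
    have "(pos \<iota> i + m) mod ?N = pos \<iota> j"
      using pos_less[OF enum, of i] pos_less[OF enum, of j] by (simp add: m_def)
    then have "\<iota> ((pos \<iota> i + m) mod ?N) = j" using iota_pos[OF enum] by simp
    with tel[OF t, of i m] have "norm (x t $ i - x t $ j) \<le> real m * (K * exp (- lam * t))" by simp
    also have "\<dots> \<le> (2 * real ?N) * (K * exp (- lam * t))"
      using pos_less[OF enum, of j] K by (intro mult_right_mono) (auto simp: m_def)
    finally show "norm (x t $ i - x t $ j) \<le> (2 * real ?N * K) * exp (- lam * t)"
      by (simp add: mult.assoc)
  qed
  show ?thesis using main lam by blast
qed

end
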